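(* Let $t\ge 1$ be an integer, $\alpha>0$, and let $\mathcal{P}$ be a non-empty $\alpha$-rich collection of paths of length $2t-2$ (i.e. with $2t-1$ vertices) in a graph $G$. If $\alpha\ge t^2$, then $G$ contains a copy of $F_{t,t}$.
   Context: For $\alpha>0$ and $k\in\mathbb{N}$, a collection $\mathcal{P}$ of labelled paths $x_1x_2\cdots x_k$ (with distinct vertices) in $G$ is $\alpha$-rich if for every $x_1x_2\cdots x_k\in\mathcal{P}$ and every $2\le i\le k-1$ there exist at least $\alpha$ distinct vertices $x_i'$ such that $x_1\cdots x_{i-1}x_i'x_{i+1}\cdots x_k\in\mathcal{P}$. The grid $F_{t,t}$ has vertex set $[t]\times[t]$, two vertices being adjacent iff they differ in exactly one coordinate and there by exactly one. *)

theory Defs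
  imports Main "HOL-Library.Extended_Real"
begin

definition graph :: "'a set \<Rightarrow> ('a \<Rightarrow> 'a \<Rightarrow> bool) \<Rightarrow> bool" where
  "graph V E \<longleftrightarrow> finite V \<and> (\<forall>x y. E x y \<longrightarrow> x \<in> V \<and> y \<in> V \<and> x \<noteq> y \<and> E y x)"

definition is_path :: "'a set \<Rightarrow> ('a \<Rightarrow> 'a \<Rightarrow> bool) \<Rightarrow> nat \<Rightarrow> 'a list \<Rightarrow> bool" where
  "is_path V E k p \<longleftrightarrow> length p = k \<and> distinct p \<and> set p \<subseteq> V \<and>
     (\<forall>i. i + 1 < k \<longrightarrow> E (p ! i) (p ! (i + 1)))"

text \<open>alpha-rich: positions 2..k-1 (1-indexed), i.e. 1..k-2 (0-indexed).
  The number of alternatives is counted as an extended natural so that infinitely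
  many alternatives also count as "at least alpha".\<close>
definition rich :: "real \<Rightarrow> nat \<Rightarrow> 'a list set \<Rightarrow> bool" where
  "rich \<alpha> k P \<longleftrightarrow> (\<forall>p\<in>P. \<forall>i. 1 \<le> i \<and> i + 2 \<le> k \<longrightarrow>
       ereal \<alpha> \<le> (if finite {v. p[i := v] \<in> P} then ereal (real (card {v. p[i := v] \<in> P})) else \<infinity>))"

definition grid_adj :: "nat \<times> nat \<Rightarrow> nat \<times> nat \<Rightarrow> bool" where
  "grid_adj u v \<longleftrightarrow> (fst u = fst v \<and> (snd u = snd v + 1 \<or> snd v = snd u + 1)) \<or>
                     (snd u = snd v \<and> (fst u = fst v + 1 \<or> fst v = fst u + 1))"

definition contains_grid :: "'a set \<Rightarrow> ('a \<Rightarrow> 'a \<Rightarrow> bool) \<Rightarrow> nat \<Rightarrow> bool" where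
  "contains_grid V E t \<longleftrightarrow> (\<exists>f. inj_on f ({1..t} \<times> {1..t}) \<and> f ` ({1..t} \<times> {1..t}) \<subseteq> V \<and>
     (\<forall>u\<in>{1..t} \<times> {1..t}. \<forall>v\<in>{1..t} \<times> {1..t}. grid_adj u v \<longrightarrow> E (f u) (f v)))"

end

theory Submission
  imports Defs
begin

definition gpath :: "nat \<Rightarrow> nat \<Rightarrow> nat \<Rightarrow> nat \<Rightarrow> nat \<times> nat" where
  "gpath t r c k = (if k + 2 \<le> r then (k + 1, 1)
     else if k + 2 \<le> r + c then (r - 1, k + 3 - r)
     else if k + 2 \<le> r + t then (r, k + 2 - r) else (k + 2 - t, t))"

definition gD :: "nat \<Rightarrow> nat \<Rightarrow> nat \<Rightarrow> (nat \<times> nat) set" where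
  "gD t r c = {(a, b). a \<in> {1..t} \<and> b \<in> {1..t} \<and> (a < r \<or> (a = r \<and> c < b) \<or> b = t)}"

lemma gpath_mem: "2 \<le> r \<Longrightarrow> r \<le> t \<Longrightarrow> c \<le> t - 1 \<Longrightarrow> k < 2 * t - 1 \<Longrightarrow> gpath t r c k \<in> gD t r c"
  by (auto simp: gpath_def gD_def)

lemma gpath_same: "k \<noteq> r + c - 2 \<Longrightarrow> 1 \<le> c \<Longrightarrow> 2 \<le> r \<Longrightarrow> gpath t r (c - 1) k = gpath t r c k"
  by (auto simp: gpath_def)

lemma gpath_new: "1 \<le> c \<Longrightarrow> c \<le> t - 1 \<Longrightarrow> 2 \<le> r \<Longrightarrow> gpath t r (c - 1) (r + c - 2) = (r, c)"
  by (auto simp: gpath_def)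

lemma gpath_left: "1 \<le> c \<Longrightarrow> c \<le> t - 1 \<Longrightarrow> 2 \<le> r \<Longrightarrow> gpath t r (c - 1) (r + c - 3) = (r - 1, c)"
  by (auto simp: gpath_def)

lemma gpath_right: "1 \<le> c \<Longrightarrow> c \<le> t - 1 \<Longrightarrow> 2 \<le> r \<Longrightarrow> gpath t r (c - 1) (r + c - 1) = (r, c + 1)"
  by (auto simp: gpath_def)

lemma gpath_row: "1 \<le> t \<Longrightarrow> gpath t r 0 = gpath t (Suc r) (t - 1)"
  by (rule ext) (auto simp: gpath_def)

lemma gD_row: "1 \<le> t \<Longrightarrow> gD t r 0 = gD t (Suc r) (t - 1)"
  by (auto simp: gD_def)

lemma gD_flip: "1 \<le> c \<Longrightarrow> c \<le> t - 1 \<Longrightarrow> 1 \<le> r \<Longrightarrow> r \<le> t \<Longrightarrow> gD t r (c - 1) = insert (r, c) (gD t r c)"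
  by (auto simp: gD_def)

lemma gD_notin: "c \<le> t - 1 \<Longrightarrow> (r, c) \<notin> gD t r c"
  by (auto simp: gD_def)

lemma gD_sub: "gD t r c \<subseteq> {1..t} \<times> {1..t}"
  by (auto simp: gD_def)

lemma gpath_level: "2 \<le> r \<Longrightarrow> fst (gpath t r c k) + snd (gpath t r c k) = k + 2"
  by (auto simp: gpath_def)

lemma nb_lem: "x \<in> insert (r, c) (gD t r c) \<Longrightarrow> grid_adj (r, c) x \<or> grid_adj x (r, c) \<Longrightarrow> c \<le> t - 1 \<Longrightarrow> x = (r - 1, c) \<or> x = (r, c + 1)"
  by (cases x) (auto simp: gD_def grid_adj_def)

lemma Dbase: "u \<in> gD t 2 (t - 1) \<Longrightarrow> 1 \<le> fst u \<and> fst u \<le> t \<and> 1 \<le> snd u \<and> snd u \<le> t \<and> (fst u = 1 \<or> snd u = t)"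
  by (cases u) (auto simp: gD_def)

lemma Dbase_inj: "u \<in> gD t 2 (t - 1) \<Longrightarrow> w \<in> gD t 2 (t - 1) \<Longrightarrow> fst u + snd u = fst w + snd w \<Longrightarrow> u = w"
  by (cases u; cases w) (auto simp: gD_def)

lemma adj_level: "grid_adj u w \<Longrightarrow> fst w + snd w = fst u + snd u + 1 \<or> fst u + snd u = fst w + snd w + 1"
  by (auto simp: grid_adj_def)

definition Inv where
  "Inv V E P t r c f \<longleftrightarrow> inj_on f (gD t r c) \<and> f ` gD t r c \<subseteq> V \<and>
     map (f \<circ> gpath t r c) [0..<2 * t - 1] \<in> P \<and>
     (\<forall>u\<in>gD t r c. \<forall>w\<in>gD t r c. grid_adj u w \<longrightarrow> E (f u) (f w))"

locale gridctx =
  fixes V :: "'a set" and E t and \<alpha> :: real and P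
  assumes gr: "graph V E" and t1: "t \<ge> 1" and ri: "rich \<alpha> (2 * t - 1) P"
    and al: "\<alpha> \<ge> real t ^ 2" and pa: "\<forall>p\<in>P. is_path V E (2 * t - 1) p"
begin

lemma symE: "E x y \<Longrightarrow> E y x"
  using gr unfolding graph_def by blast

lemma flip:
  assumes inv: "Inv V E P t r c f" and r: "2 \<le> r" "r \<le> t" and c: "1 \<le> c" "c \<le> t - 1"
  shows "\<exists>f'. Inv V E P t r (c - 1) f'"
proof -
  define n where "n = 2 * t - 1"
  define p where "p = map (f \<circ> gpath t r c) [0..<n]"
  define i where "i = r + c - 2"
  define D where "D = gD t r c"
  have pP: "p \<in> P" using inv unfolding Inv_def p_def n_def by (elim conjE) assumption
  have lenp: "length p = n" unfolding p_def by simp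
  have i1: "1 \<le> i" "i + 2 \<le> n" using r c unfolding i_def n_def by auto
  define A where "A = {v. p[i := v] \<in> P}"
  have rich_i: "ereal \<alpha> \<le> (if finite A then ereal (real (card A)) else \<infinity>)"
  proof -
    have "\<forall>i. 1 \<le> i \<and> i + 2 \<le> 2 * t - 1 \<longrightarrow> ereal \<alpha> \<le> (if finite {v. p[i := v] \<in> P} then ereal (real (card {v. p[i := v] \<in> P})) else \<infinity>)"
      using ri pP unfolding rich_def by (rule bspec)
    then have "1 \<le> i \<and> i + 2 \<le> 2 * t - 1 \<longrightarrow> ereal \<alpha> \<le> (if finite {v. p[i := v] \<in> P} then ereal (real (card {v. p[i := v] \<in> P})) else \<infinity>)"
      by (rule spec)
    then show ?thesis using i1 unfolding A_def n_def by blast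
  qed
  have finG: "finite ({1..t} \<times> {1..(t::nat)})" by simp
  have fin: "finite D" unfolding D_def using finite_subset[OF gD_sub finG] .
  have notin: "(r, c) \<notin> D" unfolding D_def using gD_notin c by blast
  have "D \<subseteq> ({1..t} \<times> {1..t}) - {(r, c)}" using gD_sub[of t r c] notin unfolding D_def by blast
  hence "card D \<le> card (({1..t} \<times> {1..t}) - {(r, c)})" by (intro card_mono) auto
  also have "\<dots> = t * t - 1" using r c by (subst card_Diff_singleton) (auto simp: card_cartesian_product)
  finally have cardD0: "card D \<le> t * t - 1" .
  have tt: "1 \<le> t * t" using t1 by simp
  have cardD: "card D < t ^ 2" using cardD0 tt unfolding power2_eq_square by linarith
  have "\<not> A \<subseteq> f ` D"
  proof
    assume sub: "A \<subseteq> f ` D"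
    hence finA: "finite A" using finite_subset finite_imageI[OF fin] by metis
    have "card A \<le> card (f ` D)" using sub fin by (intro card_mono) auto
    also have "\<dots> \<le> card D" using card_image_le[OF fin] .
    finally have "card A < t ^ 2" using cardD by linarith
    hence "real (card A) < real t ^ 2" by (metis of_nat_less_iff of_nat_power)
    moreover have "\<alpha> \<le> real (card A)" using rich_i finA by simp
    ultimately show False using al by linarith
  qed
  then obtain v where vA: "p[i := v] \<in> P" and vn: "v \<notin> f ` D" unfolding A_def by blast
  define f' where "f' = f((r, c) := v)"
  define q where "q = p[i := v]"
  have qeq: "map (f' \<circ> gpath t r (c - 1)) [0..<n] = q"
  proof (rule nth_equalityI)
    show "length (map (f' \<circ> gpath t r (c - 1)) [0..<n]) = length q" unfolding q_def using lenp by simp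
  next
    fix k assume "k < length (map (f' \<circ> gpath t r (c - 1)) [0..<n])"
    hence k: "k < n" by simp
    show "map (f' \<circ> gpath t r (c - 1)) [0..<n] ! k = q ! k"
    proof (cases "k = i")
      case True
      then show ?thesis using k lenp gpath_new[OF c r(1)] unfolding q_def f'_def i_def by simp
    next
      case False
      have m: "gpath t r c k \<in> D" using gpath_mem[OF r c(2)] k unfolding n_def D_def by blast
      hence "gpath t r c k \<noteq> (r, c)" using notin by auto
      then show ?thesis using False k lenp gpath_same[of k r c t] c r
        unfolding q_def f'_def i_def p_def by simp
    qed
  qed
  have qpath: "is_path V E n q" using pa vA unfolding q_def n_def by blast
  have qnth: "q ! k = f' (gpath t r (c - 1) k)" if k: "k < n" for k
  proof -
    have "q ! k = map (f' \<circ> gpath t r (c - 1)) [0..<n] ! k" using qeq by simp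
    also have "\<dots> = f' (gpath t r (c - 1) k)" using k by simp
    finally show ?thesis .
  qed
  have step: "E (q ! k) (q ! (k + 1))" if "k + 1 < n" for k
    using qpath that unfolding is_path_def by blast
  have qa: "q ! (i - 1) = f' (r - 1, c)"
    using qnth[of "i - 1"] i1 gpath_left[OF c r(1)] by (simp add: i_def numeral_3_eq_3)
  have qb: "q ! i = f' (r, c)"
    using qnth[of i] i1 gpath_new[OF c r(1)] by (simp add: i_def)
  have qc: "q ! (i + 1) = f' (r, c + 1)"
  proof -
    have ii: "i + 1 = r + c - 1" using r c unfolding i_def by simp
    have "i + 1 < n" using i1 by simp
    then show ?thesis using qnth[of "i + 1"] gpath_right[OF c r(1)] unfolding ii by simp
  qed
  have e1: "E (f' (r - 1, c)) (f' (r, c))"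
  proof -
    have "E (q ! (i - 1)) (q ! (i - 1 + 1))" using i1 by (intro step) simp
    moreover have "i - 1 + 1 = i" using i1 by simp
    ultimately show ?thesis using qa qb by simp
  qed
  have e2: "E (f' (r, c)) (f' (r, c + 1))" using step[of i] i1 qb qc by simp
  have e1': "E (f' (r, c)) (f' (r - 1, c))" using symE[OF e1] .
  have e2': "E (f' (r, c + 1)) (f' (r, c))" using symE[OF e2] .
  have D': "gD t r (c - 1) = insert (r, c) D" unfolding D_def using gD_flip c r by auto
  have fD: "\<forall>x\<in>D. f' x = f x" using notin unfolding f'_def by auto
  have inj: "inj_on f D" and imV: "f ` D \<subseteq> V"
    and ed: "\<forall>u\<in>D. \<forall>w\<in>D. grid_adj u w \<longrightarrow> E (f u) (f w)"
    using inv unfolding Inv_def D_def by auto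
  have "inj_on f' (insert (r, c) D)"
  proof -
    have "inj_on f' D" using inj_on_cong[of D f' f] fD inj by auto
    moreover have "f' (r, c) \<notin> f' ` (D - {(r, c)})" using vn fD unfolding f'_def by auto
    ultimately show ?thesis by simp
  qed
  moreover have "f' ` insert (r, c) D \<subseteq> V"
  proof -
    have "q ! i \<in> set q" using i1 lenp unfolding q_def by (intro nth_mem) simp
    moreover have "q ! i = v" using i1 lenp unfolding q_def by simp
    ultimately have "v \<in> V" using qpath unfolding is_path_def by auto
    thus ?thesis using imV fD unfolding f'_def by auto
  qed
  moreover have "\<forall>u\<in>insert (r, c) D. \<forall>w\<in>insert (r, c) D. grid_adj u w \<longrightarrow> E (f' u) (f' w)"
  proof (intro ballI impI)
    fix u w assume u: "u \<in> insert (r, c) D" and w: "w \<in> insert (r, c) D" and adj: "grid_adj u w"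
    have nb: "\<And>x. x \<in> insert (r, c) D \<Longrightarrow> grid_adj (r, c) x \<or> grid_adj x (r, c) \<Longrightarrow> x = (r - 1, c) \<or> x = (r, c + 1)"
      using nb_lem c unfolding D_def by blast
    show "E (f' u) (f' w)"
    proof (cases "u = (r, c)")
      case True
      then have "w = (r - 1, c) \<or> w = (r, c + 1)" using nb w adj by blast
      then show ?thesis using True e1 e2 e1' e2' by auto
    next
      case False
      note uF = False
      show ?thesis
      proof (cases "w = (r, c)")
        case True
        then have "u = (r - 1, c) \<or> u = (r, c + 1)" using nb u adj by blast
        then show ?thesis using True e1 e2 e1' e2' by auto
      next
        case False
        then show ?thesis using uF u w adj ed fD by auto
      qed
    qed
  qed
  moreover have "map (f' \<circ> gpath t r (c - 1)) [0..<2 * t - 1] \<in> P" using qeq vA unfolding q_def n_def by simp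
  ultimately have "Inv V E P t r (c - 1) f'" unfolding Inv_def D' by blast
  thus ?thesis by blast
qed

lemma row_sweep:
  assumes "Inv V E P t r (t - 1) f" "2 \<le> r" "r \<le> t"
  shows "\<exists>f. Inv V E P t r 0 f"
proof -
  have "d \<le> t - 1 \<Longrightarrow> \<exists>f. Inv V E P t r (t - 1 - d) f" for d
  proof (induction d)
    case 0 then show ?case using assms by auto
  next
    case (Suc d)
    then obtain f where "Inv V E P t r (t - 1 - d) f" by auto
    from flip[OF this assms(2,3)] Suc.prems have "\<exists>f'. Inv V E P t r (t - 1 - d - 1) f'" by auto
    then show ?case by (simp add: diff_diff_add)
  qed
  from this[of "t - 1"] show ?thesis by simp
qed

lemma row_next: "Inv V E P t r 0 f \<Longrightarrow> Inv V E P t (Suc r) (t - 1) f"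
  unfolding Inv_def using gpath_row[OF t1] gD_row[OF t1] by metis

lemma base_inv: "P \<noteq> {} \<Longrightarrow> \<exists>f. Inv V E P t 2 (t - 1) f"
proof -
  assume "P \<noteq> {}"
  then obtain p where pP: "p \<in> P" by blast
  define n where "n = 2 * t - 1"
  have pp: "is_path V E n p" using pa pP n_def by blast
  have lenp: "length p = n" using pp unfolding is_path_def by blast
  have dist: "distinct p" using pp unfolding is_path_def by blast
  have setV: "set p \<subseteq> V" using pp unfolding is_path_def by blast
  have stepp: "E (p ! k) (p ! (k + 1))" if "k + 1 < n" for k
    using pp that unfolding is_path_def by blast
  define lv where "lv = (\<lambda>u::nat \<times> nat. fst u + snd u - 2)"
  define f where "f = (\<lambda>u. p ! lv u)"
  have lev: "lv u < n" if "u \<in> gD t 2 (t - 1)" for u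
    using Dbase[OF that] unfolding lv_def n_def by auto
  have F1: "map (f \<circ> gpath t 2 (t - 1)) [0..<n] = p"
  proof (rule nth_equalityI)
    show "length (map (f \<circ> gpath t 2 (t - 1)) [0..<n]) = length p" using lenp by simp
  next
    fix k assume "k < length (map (f \<circ> gpath t 2 (t - 1)) [0..<n])"
    hence "k < n" by simp
    moreover have "fst (gpath t 2 (t - 1) k) + snd (gpath t 2 (t - 1) k) = k + 2" by (rule gpath_level) simp
    ultimately show "map (f \<circ> gpath t 2 (t - 1)) [0..<n] ! k = p ! k"
      unfolding f_def lv_def by simp
  qed
  have F2: "inj_on f (gD t 2 (t - 1))"
  proof (rule inj_onI)
    fix u w assume u: "u \<in> gD t 2 (t - 1)" and w: "w \<in> gD t 2 (t - 1)" and fe: "f u = f w"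
    have "lv u < length p" "lv w < length p" using lev[OF u] lev[OF w] lenp by auto
    then have "lv u = lv w" using nth_eq_iff_index_eq[OF dist] fe unfolding f_def by blast
    then have "fst u + snd u = fst w + snd w" using Dbase[OF u] Dbase[OF w] unfolding lv_def by auto
    then show "u = w" using Dbase_inj[OF u w] by blast
  qed
  have F3: "f ` gD t 2 (t - 1) \<subseteq> V"
  proof
    fix x assume "x \<in> f ` gD t 2 (t - 1)"
    then obtain u where u: "u \<in> gD t 2 (t - 1)" and x: "x = p ! lv u" unfolding f_def by blast
    have "lv u < length p" using lev[OF u] lenp by simp
    then have "x \<in> set p" unfolding x by (rule nth_mem)
    then show "x \<in> V" using setV by blast
  qed
  have F4: "\<forall>u\<in>gD t 2 (t - 1). \<forall>w\<in>gD t 2 (t - 1). grid_adj u w \<longrightarrow> E (f u) (f w)"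
  proof (intro ballI impI)
    fix u w assume u: "u \<in> gD t 2 (t - 1)" and w: "w \<in> gD t 2 (t - 1)" and adj: "grid_adj u w"
    have l: "lv u < n" "lv w < n" using lev[OF u] lev[OF w] by simp_all
    have "lv w = lv u + 1 \<or> lv u = lv w + 1"
      using adj_level[OF adj] Dbase[OF u] Dbase[OF w] unfolding lv_def by auto
    then show "E (f u) (f w)"
    proof
      assume h: "lv w = lv u + 1"
      show ?thesis unfolding f_def h by (rule stepp) (use l h in simp)
    next
      assume h: "lv u = lv w + 1"
      have "E (f w) (f u)" unfolding f_def h by (rule stepp) (use l h in simp)
      then show ?thesis by (rule symE)
    qed
  qed
  have F1': "map (f \<circ> gpath t 2 (t - 1)) [0..<2 * t - 1] \<in> P" using F1 pP unfolding n_def by simp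
  have "Inv V E P t 2 (t - 1) f" unfolding Inv_def by (rule conjI[OF F2 conjI[OF F3 conjI[OF F1' F4]]])
  then show ?thesis by blast
qed

lemma all_rows: assumes ne: "P \<noteq> {}" shows "2 \<le> r \<Longrightarrow> r \<le> t + 1 \<Longrightarrow> \<exists>f. Inv V E P t r (t - 1) f"
proof (induction r rule: dec_induct)
  case base then show ?case using base_inv ne by blast
next
  case (step r)
  then obtain f where "Inv V E P t r (t - 1) f" by auto
  then obtain g where "Inv V E P t r 0 g" using row_sweep step by fastforce
  then show ?case using row_next by blast
qed

lemma final: "P \<noteq> {} \<Longrightarrow> contains_grid V E t"
proof -
  assume "P \<noteq> {}"
  from all_rows[OF this, of "t + 1"] obtain f where inv: "Inv V E P t (t + 1) (t - 1) f" using t1 by auto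
  have "gD t (t + 1) (t - 1) = {1..t} \<times> {1..t}" by (auto simp: gD_def)
  then show ?thesis using inv unfolding Inv_def contains_grid_def by metis
qed

end

theorem proposition3p3:
  fixes V :: "'a set" and E :: "'a \<Rightarrow> 'a \<Rightarrow> bool" and t :: nat and \<alpha> :: real
    and P :: "'a list set"
  assumes "graph V E" and "t \<ge> 1" and "\<alpha> > 0"
    and "P \<noteq> {}" and "\<forall>p\<in>P. is_path V E (2 * t - 1) p"
    and "rich \<alpha> (2 * t - 1) P"
    and "\<alpha> \<ge> real t ^ 2"
  shows "contains_grid V E t"
proof -
  interpret gridctx V E t \<alpha> P using assms by unfold_locales auto
  show ?thesis using final assms(4) by blast
qed

end
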